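(* Assume the equation $\partial_tv+A(Av+l(t)v)=0$ satisfies the strong cone condition with constant $\mu>0$ and function $\alpha(t)$. Then there exists $\varepsilon_0>0$ such that for every $0<\varepsilon<\varepsilon_0$ every solution $v(t)$ of this equation satisfies $\frac{d}{dt}V_\varepsilon(v(t))+\big(\alpha(t)+\tfrac12\lambda_1\mu\big)V_\varepsilon(v(t))\le0$ and $\frac{d}{dt}V_{-\varepsilon}(v(t))+\big(\alpha(t)-\tfrac12\lambda_1\mu\big)V_{-\varepsilon}(v(t))\le0.$
   Context: Let $H$ be a real separable Hilbert space with inner product $(\cdot,\cdot)$ and norm $\|\cdot\|_H$, and let $A:D(A)\to H$ be a linear self-adjoint positive operator with compact inverse, with orthonormal eigenbasis $\{e_n\}$, $Ae_n=\lambda_ne_n$, $0<\lambda_1\le\lambda_2\le\dots\to\infty$. For $s\ge0$, $H^s=D(A^{s/2})$ with $\|u\|_{H^s}^2=\sum_n\lambda_n^s|(u,e_n)|^2$; for $s<0$, the completion of $H$. For fixed $N$: $P_N$ the orthoprojector onto $\mathrm{span}\{e_1,\dots,e_N\}$, $Q_N=\mathrm{Id}-P_N$, $\xi_+=P_N\xi$, $\xi_-=Q_N\xi$. $V(\xi)=\|\xi_-\|^2_{H^{-1}}-\|\xi_+\|^2_{H^{-1}}$ and, for $\varepsilon\in\mathbb{R}$, $V_\varepsilon(\xi)=\varepsilon\|\xi\|^2_{H^{-1}}+V(\xi)=(1+\varepsilon)\|\xi_-\|^2_{H^{-1}}-(1-\varepsilon)\|\xi_+\|^2_{H^{-1}}$.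 $l\in L^\infty(\mathbb{R},\mathcal L(H,H))$ with $\|l(t)\|_{\mathcal L(H,H)}\le L$. Strong cone condition for $\partial_tv+A(Av+l(t)v)=0$: there exist $\mu>0$ and $\alpha:\mathbb{R}\to\mathbb{R}$ with $0<\alpha_-\le\alpha(t)\le\alpha_+$ such that every solution $v(t)$, $t\in[S,T]$, satisfies $\frac{d}{dt}V(v(t))+\alpha(t)V(v(t))\le-\mu\|v(t)\|_H^2$ for all $t\in[S,T]$. *)

theory Defs
  imports "HOL-Analysis.Analysis"
begin

text \<open>
  The operator A is given through its orthonormal eigenbasis e and eigenvalues lam:
  A e n = lam n * e n.  Indexing starts at 0, so lam 0 is the paper's lambda_1 and
  P_N projects onto span of e 0, ..., e (N-1).
\<close>

definition spectral_basis :: "(nat \<Rightarrow> 'a::{real_inner,complete_space}) \<Rightarrow> (nat \<Rightarrow> real) \<Rightarrow> bool" where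
  "spectral_basis e lam \<longleftrightarrow>
     (\<forall>n m. e n \<bullet> e m = (if n = m then 1 else 0)) \<and>
     (\<forall>u. (\<forall>n. u \<bullet> e n = 0) \<longrightarrow> u = 0) \<and>
     0 < lam 0 \<and> (\<forall>n. lam n \<le> lam (Suc n)) \<and> filterlim lam at_top sequentially"

definition opA :: "(nat \<Rightarrow> 'a::{real_inner,complete_space}) \<Rightarrow> (nat \<Rightarrow> real) \<Rightarrow> 'a \<Rightarrow> 'a" where
  "opA e lam u = (\<Sum>n. (lam n * (u \<bullet> e n)) *\<^sub>R e n)"

definition hnorm2 :: "(nat \<Rightarrow> 'a::real_inner) \<Rightarrow> (nat \<Rightarrow> real) \<Rightarrow> real \<Rightarrow> 'a \<Rightarrow> real" where
  "hnorm2 e lam s u = (\<Sum>n. lam n powr s * (u \<bullet> e n)\<^sup>2)"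

definition projP :: "(nat \<Rightarrow> 'a::real_inner) \<Rightarrow> nat \<Rightarrow> 'a \<Rightarrow> 'a" where
  "projP e N u = (\<Sum>n<N. (u \<bullet> e n) *\<^sub>R e n)"

definition projQ :: "(nat \<Rightarrow> 'a::real_inner) \<Rightarrow> nat \<Rightarrow> 'a \<Rightarrow> 'a" where
  "projQ e N u = u - projP e N u"

definition Vfun :: "(nat \<Rightarrow> 'a::real_inner) \<Rightarrow> (nat \<Rightarrow> real) \<Rightarrow> nat \<Rightarrow> 'a \<Rightarrow> real" where
  "Vfun e lam N \<xi> = hnorm2 e lam (-1) (projQ e N \<xi>) - hnorm2 e lam (-1) (projP e N \<xi>)"

definition Veps :: "(nat \<Rightarrow> 'a::real_inner) \<Rightarrow> (nat \<Rightarrow> real) \<Rightarrow> nat \<Rightarrow> real \<Rightarrow> 'a \<Rightarrow> real" where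
  "Veps e lam N \<epsilon> \<xi> = \<epsilon> * hnorm2 e lam (-1) \<xi> + Vfun e lam N \<xi>"

text \<open>l in L^infinity(R, L(H,H)) with operator norm bounded by L (strongly measurable).\<close>
definition bounded_op_family :: "(real \<Rightarrow> 'a::{real_inner,complete_space} \<Rightarrow> 'a) \<Rightarrow> real \<Rightarrow> bool" where
  "bounded_op_family l L \<longleftrightarrow>
     (\<forall>t. bounded_linear (l t) \<and> onorm (l t) \<le> L) \<and>
     (\<forall>u. (\<lambda>t. l t u) \<in> borel_measurable borel)"

text \<open>Solutions of  v' + A(A v + l(t) v) = 0  on [S,T]: v(t) lies in H^1, v is continuous
  with values in H^1, and the equation holds tested against every eigenvector e_n:
  d/dt (v(t),e_n) = - lam_n (lam_n (v(t),e_n) + (l(t) v(t), e_n)).\<close>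
definition is_solution :: "(nat \<Rightarrow> 'a::{real_inner,complete_space}) \<Rightarrow> (nat \<Rightarrow> real) \<Rightarrow>
    (real \<Rightarrow> 'a \<Rightarrow> 'a) \<Rightarrow> real \<Rightarrow> real \<Rightarrow> (real \<Rightarrow> 'a) \<Rightarrow> bool" where
  "is_solution e lam l S T v \<longleftrightarrow>
     (\<forall>t\<in>{S..T}. summable (\<lambda>n. lam n * (v t \<bullet> e n)\<^sup>2)) \<and>
     (\<forall>t0\<in>{S..T}. ((\<lambda>t. hnorm2 e lam 1 (v t - v t0)) \<longlongrightarrow> 0) (at t0 within {S..T})) \<and>
     (\<forall>n. \<forall>t\<in>{S..T}. ((\<lambda>s. v s \<bullet> e n) has_real_derivative
         (- lam n * (lam n * (v t \<bullet> e n) + (l t (v t) \<bullet> e n)))) (at t within {S..T}))"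

definition strong_cone_condition :: "(nat \<Rightarrow> 'a::{real_inner,complete_space}) \<Rightarrow> (nat \<Rightarrow> real) \<Rightarrow> nat \<Rightarrow>
    (real \<Rightarrow> 'a \<Rightarrow> 'a) \<Rightarrow> real \<Rightarrow> (real \<Rightarrow> real) \<Rightarrow> bool" where
  "strong_cone_condition e lam N l \<mu> \<alpha> \<longleftrightarrow>
     0 < \<mu> \<and> (\<exists>am ap. 0 < am \<and> (\<forall>t. am \<le> \<alpha> t \<and> \<alpha> t \<le> ap)) \<and>
     (\<forall>S T v. S < T \<longrightarrow> is_solution e lam l S T v \<longrightarrow>
        (\<forall>t\<in>{S..T}. \<exists>D. ((\<lambda>s. Vfun e lam N (v s)) has_real_derivative D) (at t within {S..T}) \<and>
             D + \<alpha> t * Vfun e lam N (v t) \<le> - \<mu> * (norm (v t))\<^sup>2))"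

end

theory Submission
  imports Defs
begin

definition ON :: "(nat \<Rightarrow> 'a::real_inner) \<Rightarrow> bool" where
 "ON e \<longleftrightarrow> (\<forall>n m. e n \<bullet> e m = (if n = m then 1 else 0))"

lemma inner_projP:
  assumes "ON e" shows "projP e N u \<bullet> e m = (if m < N then u \<bullet> e m else 0)"
proof -
  have "projP e N u \<bullet> e m = (\<Sum>n<N. (u \<bullet> e n) * (if n = m then 1 else 0))"
    using assms unfolding projP_def ON_def by (simp add: inner_sum_left)
  also have "\<dots> = (if m < N then u \<bullet> e m else 0)"
    by (simp add: if_distrib[of "\<lambda>x. _ * x"] sum.delta' cong: if_cong)
  finally show ?thesis .
qed

lemma inner_projQ:
  assumes "ON e" shows "projQ e N u \<bullet> e m = (if m < N then 0 else u \<bullet> e m)"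
  using inner_projP[OF assms] unfolding projQ_def by (simp add: inner_diff_left)

lemma bessel_partial:
  assumes "ON e" shows "(\<Sum>n<M. (u \<bullet> e n)\<^sup>2) \<le> (norm u)\<^sup>2"
proof -
  let ?P = "projP e M u"
  have a: "?P \<bullet> ?P = (\<Sum>n<M. (u \<bullet> e n)\<^sup>2)"
  proof -
    have "?P \<bullet> ?P = (\<Sum>n<M. (u \<bullet> e n) * (e n \<bullet> ?P))"
      by (subst (1) projP_def) (simp add: inner_sum_left)
    also have "\<dots> = (\<Sum>n<M. (u \<bullet> e n)\<^sup>2)"
      by (rule sum.cong) (auto simp: inner_commute[of "e _"] inner_projP[OF assms] power2_eq_square)
    finally show ?thesis .
  qed
  have b: "u \<bullet> ?P = (\<Sum>n<M. (u \<bullet> e n)\<^sup>2)"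
    unfolding projP_def by (simp add: inner_sum_right power2_eq_square)
  have "0 \<le> (u - ?P) \<bullet> (u - ?P)" by simp
  also have "\<dots> = u \<bullet> u - 2 * (u \<bullet> ?P) + ?P \<bullet> ?P"
    by (simp add: inner_diff_left inner_diff_right inner_commute)
  finally show ?thesis using a b by (simp add: power2_norm_eq_inner)
qed

lemma coef_summable:
  assumes "ON e" shows "summable (\<lambda>n. (u \<bullet> e n)\<^sup>2)" and "(\<Sum>n. (u \<bullet> e n)\<^sup>2) \<le> (norm u)\<^sup>2"
proof -
  show s: "summable (\<lambda>n. (u \<bullet> e n)\<^sup>2)"
    by (rule summableI_nonneg_bounded[where x="(norm u)\<^sup>2"]) (use bessel_partial[OF assms] in auto)
  show "(\<Sum>n. (u \<bullet> e n)\<^sup>2) \<le> (norm u)\<^sup>2"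
    by (rule suminf_le_const[OF s]) (use bessel_partial[OF assms] in auto)
qed

lemma coef_le: assumes "ON e" shows "(u \<bullet> e n)\<^sup>2 \<le> (norm u)\<^sup>2"
proof -
  have "norm (e n) = 1" using assms unfolding ON_def by (metis norm_eq_sqrt_inner real_sqrt_one)
  have "\<bar>u \<bullet> e n\<bar> \<le> norm u" using Cauchy_Schwarz_ineq2[of u "e n"] \<open>norm (e n) = 1\<close> by simp
  thus ?thesis by (metis abs_le_square_iff abs_norm_cancel)
qed

lemma sb_ON: "spectral_basis e lam \<Longrightarrow> ON e"
  unfolding spectral_basis_def ON_def by blast

lemma sb_lam: assumes "spectral_basis e lam" shows "0 < lam 0" "lam 0 \<le> lam n" "0 < lam n"
proof -
  show "0 < lam 0" using assms unfolding spectral_basis_def by blast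
  show "lam 0 \<le> lam n" using assms unfolding spectral_basis_def by (metis lift_Suc_mono_le zero_le)
  thus "0 < lam n" using \<open>0 < lam 0\<close> by linarith
qed

lemma hn_term: assumes "spectral_basis e lam"
  shows "lam n powr -1 * (w \<bullet> e n)\<^sup>2 = (w \<bullet> e n)\<^sup>2 / lam n"
    "0 \<le> lam n powr -1 * (w \<bullet> e n)\<^sup>2"
    "lam 0 * (lam n powr -1 * (w \<bullet> e n)\<^sup>2) \<le> (w \<bullet> e n)\<^sup>2"
proof -
  have p: "0 < lam n" "lam 0 \<le> lam n" "0 < lam 0" using sb_lam[OF assms] by auto
  show eq: "lam n powr -1 * (w \<bullet> e n)\<^sup>2 = (w \<bullet> e n)\<^sup>2 / lam n" using p by (simp add: powr_neg_one)
  show "0 \<le> lam n powr -1 * (w \<bullet> e n)\<^sup>2" using p by simp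
  have "lam 0 * ((w \<bullet> e n)\<^sup>2 / lam n) \<le> lam n * ((w \<bullet> e n)\<^sup>2 / lam n)"
    using p by (intro mult_right_mono) auto
  thus "lam 0 * (lam n powr -1 * (w \<bullet> e n)\<^sup>2) \<le> (w \<bullet> e n)\<^sup>2" using p eq by simp
qed

lemma hn_summable: assumes "spectral_basis e lam"
  shows "summable (\<lambda>n. lam n powr -1 * (w \<bullet> e n)\<^sup>2)"
proof (rule summable_comparison_test')
  show "summable (\<lambda>n. (w \<bullet> e n)\<^sup>2 / lam 0)"
    using coef_summable(1)[OF sb_ON[OF assms]] by (rule summable_divide)
  fix n :: nat
  show "norm (lam n powr -1 * (w \<bullet> e n)\<^sup>2) \<le> (w \<bullet> e n)\<^sup>2 / lam 0"
    using hn_term[OF assms, of n w] sb_lam[OF assms] by (simp add: field_simps)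
qed

lemma hn_bound: assumes "spectral_basis e lam"
  shows "0 \<le> hnorm2 e lam (-1) w" "lam 0 * hnorm2 e lam (-1) w \<le> (\<Sum>n. (w \<bullet> e n)\<^sup>2)"
proof -
  show "0 \<le> hnorm2 e lam (-1) w" unfolding hnorm2_def
    using hn_term(2)[OF assms] hn_summable[OF assms] by (simp add: suminf_nonneg)
  have "lam 0 * hnorm2 e lam (-1) w = (\<Sum>n. lam 0 * (lam n powr -1 * (w \<bullet> e n)\<^sup>2))"
    unfolding hnorm2_def by (rule suminf_mult[OF hn_summable[OF assms], symmetric])
  also have "\<dots> \<le> (\<Sum>n. (w \<bullet> e n)\<^sup>2)"
    by (intro suminf_le summable_mult hn_summable[OF assms] coef_summable(1)[OF sb_ON[OF assms]] hn_term(3)[OF assms])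
  finally show "lam 0 * hnorm2 e lam (-1) w \<le> (\<Sum>n. (w \<bullet> e n)\<^sup>2)" .
qed

lemma hnP: assumes "spectral_basis e lam"
  shows "hnorm2 e lam (-1) (projP e N u) = (\<Sum>n<N. (u \<bullet> e n)\<^sup>2 / lam n)"
proof -
  have "hnorm2 e lam (-1) (projP e N u) = (\<Sum>n<N. lam n powr -1 * (projP e N u \<bullet> e n)\<^sup>2)"
    unfolding hnorm2_def by (rule suminf_finite) (auto simp: inner_projP[OF sb_ON[OF assms]])
  also have "\<dots> = (\<Sum>n<N. (u \<bullet> e n)\<^sup>2 / lam n)"
    by (rule sum.cong) (auto simp del: powr_neg_one' simp: inner_projP[OF sb_ON[OF assms]] hn_term(1)[OF assms])
  finally show ?thesis .
qed

lemma hn_split: assumes "spectral_basis e lam"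
  shows "hnorm2 e lam (-1) u = hnorm2 e lam (-1) (projQ e N u) + hnorm2 e lam (-1) (projP e N u)"
proof -
  have "hnorm2 e lam (-1) (projQ e N u) + hnorm2 e lam (-1) (projP e N u) =
     (\<Sum>n. lam n powr -1 * (projQ e N u \<bullet> e n)\<^sup>2 + lam n powr -1 * (projP e N u \<bullet> e n)\<^sup>2)"
    unfolding hnorm2_def by (rule suminf_add[OF hn_summable[OF assms] hn_summable[OF assms]])
  also have "\<dots> = hnorm2 e lam (-1) u" unfolding hnorm2_def
    by (rule suminf_cong) (simp add: inner_projP[OF sb_ON[OF assms]] inner_projQ[OF sb_ON[OF assms]])
  finally show ?thesis by simp
qed

lemma hn_bounds2: assumes "spectral_basis e lam"
  shows "lam 0 * hnorm2 e lam (-1) (projQ e N u) \<le> (norm u)\<^sup>2"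
    "lam 0 * hnorm2 e lam (-1) (projP e N u) \<le> (norm u)\<^sup>2"
proof -
  have O: "ON e" by (rule sb_ON[OF assms])
  have "(\<Sum>n. (projQ e N u \<bullet> e n)\<^sup>2) \<le> (\<Sum>n. (u \<bullet> e n)\<^sup>2)"
    by (intro suminf_le coef_summable(1)[OF O]) (simp add: inner_projQ[OF O])
  thus "lam 0 * hnorm2 e lam (-1) (projQ e N u) \<le> (norm u)\<^sup>2"
    using hn_bound(2)[OF assms, of "projQ e N u"] coef_summable(2)[OF O, of u] by linarith
  have "(\<Sum>n. (projP e N u \<bullet> e n)\<^sup>2) \<le> (\<Sum>n. (u \<bullet> e n)\<^sup>2)"
    by (intro suminf_le coef_summable(1)[OF O]) (simp add: inner_projP[OF O])
  thus "lam 0 * hnorm2 e lam (-1) (projP e N u) \<le> (norm u)\<^sup>2"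
    using hn_bound(2)[OF assms, of "projP e N u"] coef_summable(2)[OF O, of u] by linarith
qed


lemma alg1:
  fixes DV dP \<alpha> ap \<mu> l0 x Qq Pp K \<epsilon> :: real
  assumes x: "0 \<le> x" and l0: "0 < l0" and mu: "0 < \<mu>" and ep: "0 < \<epsilon>" and al: "0 < \<alpha>" "\<alpha> \<le> ap"
    and K: "0 \<le> K" and eB: "\<epsilon> * (4*K + 2*ap/l0 + 2*\<mu>) \<le> \<mu>/2"
    and cone: "DV + \<alpha>*(Qq-Pp) \<le> -\<mu>*x" and dP: "\<bar>dP\<bar> \<le> 2*K*x"
    and Q: "0 \<le> Qq" "l0*Qq \<le> x" and P: "0 \<le> Pp" "l0*Pp \<le> x"
  shows "(1+\<epsilon>)*DV + 2*\<epsilon>*dP + (\<alpha> + l0*\<mu>/2)*((1+\<epsilon>)*(Qq-Pp) + 2*\<epsilon>*Pp) \<le> 0"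
proof -
  have E: "(1+\<epsilon>)*DV + 2*\<epsilon>*dP + (\<alpha> + l0*\<mu>/2)*((1+\<epsilon>)*(Qq-Pp) + 2*\<epsilon>*Pp)
    = (1+\<epsilon>)*(DV+\<alpha>*(Qq-Pp)) + \<epsilon>*(2*dP) + \<epsilon>*(2*(\<alpha>*Pp)) + (1+\<epsilon>)*(\<mu>/2*(l0*Qq - l0*Pp)) + \<epsilon>*(\<mu>*(l0*Pp))"
    by (simp add: field_simps)
  have h1: "(1+\<epsilon>)*(DV+\<alpha>*(Qq-Pp)) \<le> (1+\<epsilon>)*(-\<mu>*x)" using cone ep by (intro mult_left_mono) auto
  have h2: "\<epsilon>*(2*dP) \<le> \<epsilon>*(4*K*x)" using dP ep by (intro mult_left_mono) auto
  have "\<alpha>*Pp \<le> ap*Pp" using al P by (intro mult_right_mono) auto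
  also have "ap * Pp \<le> ap * (x/l0)" using al P l0 by (intro mult_left_mono) (auto simp: field_simps)
  finally have h3: "\<epsilon>*(2*(\<alpha>*Pp)) \<le> \<epsilon>*(2*(ap*(x/l0)))" using ep by (intro mult_left_mono) auto
  have h4: "(1+\<epsilon>)*(\<mu>/2*(l0*Qq - l0*Pp)) \<le> (1+\<epsilon>)*(\<mu>/2*x)"
  proof -
    have "0 \<le> l0*Pp" using l0 P by simp
    hence "l0*Qq - l0*Pp \<le> x" using Q by linarith
    moreover have "0 \<le> \<mu>/2" using mu by simp
    ultimately have "\<mu>/2*(l0*Qq - l0*Pp) \<le> \<mu>/2*x" by (rule mult_left_mono)
    moreover have "0 \<le> 1+\<epsilon>" using ep by simp
    ultimately show ?thesis by (rule mult_left_mono)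
  qed
  have h5: "\<epsilon>*(\<mu>*(l0*Pp)) \<le> \<epsilon>*(\<mu>*x)" using P ep mu by (intro mult_left_mono) auto
  have h6: "x*(\<epsilon> * (4*K + 2*ap/l0 + 2*\<mu>)) \<le> x*(\<mu>/2)" using eB x by (intro mult_left_mono) auto
  have F: "(1+\<epsilon>)*(-\<mu>*x) + \<epsilon>*(4*K*x) + \<epsilon>*(2*(ap*(x/l0))) + (1+\<epsilon>)*(\<mu>/2*x) + \<epsilon>*(\<mu>*x)
     = x*(\<epsilon> * (4*K + 2*ap/l0 + 2*\<mu>)) - x*(\<mu>/2) - 3*\<epsilon>*\<mu>*x/2" by (simp add: field_simps)
  have "0 \<le> \<epsilon>*\<mu>*x" using ep mu x by simp
  show ?thesis unfolding E using h1 h2 h3 h4 h5 h6 F \<open>0 \<le> \<epsilon>*\<mu>*x\<close> by linarith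
qed

lemma alg2:
  fixes DV dP \<alpha> ap \<mu> l0 x Qq Pp K \<epsilon> :: real
  assumes x: "0 \<le> x" and l0: "0 < l0" and mu: "0 < \<mu>" and ep: "0 < \<epsilon>" "\<epsilon> < 1" and al: "0 < \<alpha>"
    and K: "0 \<le> K" and eB: "\<epsilon> * (4*K + 2*\<mu>) \<le> \<mu>/2"
    and cone: "DV + \<alpha>*(Qq-Pp) \<le> -\<mu>*x" and dP: "\<bar>dP\<bar> \<le> 2*K*x"
    and Q: "0 \<le> Qq" "l0*Qq \<le> x" and P: "0 \<le> Pp" "l0*Pp \<le> x"
  shows "(1-\<epsilon>)*DV - 2*\<epsilon>*dP + (\<alpha> - l0*\<mu>/2)*((1-\<epsilon>)*(Qq-Pp) - 2*\<epsilon>*Pp) \<le> 0"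
proof -
  have E: "(1-\<epsilon>)*DV - 2*\<epsilon>*dP + (\<alpha> - l0*\<mu>/2)*((1-\<epsilon>)*(Qq-Pp) - 2*\<epsilon>*Pp)
    = (1-\<epsilon>)*(DV+\<alpha>*(Qq-Pp)) - \<epsilon>*(2*dP) - \<epsilon>*(2*(\<alpha>*Pp)) - (1-\<epsilon>)*(\<mu>/2*(l0*Qq)) + (1-\<epsilon>)*(\<mu>/2*(l0*Pp)) + \<epsilon>*(\<mu>*(l0*Pp))"
    by (simp add: field_simps)
  have h1: "(1-\<epsilon>)*(DV+\<alpha>*(Qq-Pp)) \<le> (1-\<epsilon>)*(-\<mu>*x)" using cone ep by (intro mult_left_mono) auto
  have h2: "-(\<epsilon>*(2*dP)) \<le> \<epsilon>*(4*K*x)" proof -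
    have "-(2*dP) \<le> 4*K*x" using dP by linarith
    hence "\<epsilon>*(-(2*dP)) \<le> \<epsilon>*(4*K*x)" using ep by (intro mult_left_mono) auto
    thus ?thesis by simp
  qed
  have h3: "0 \<le> \<epsilon>*(2*(\<alpha>*Pp))" using ep al P by simp
  have h4: "0 \<le> (1-\<epsilon>)*(\<mu>/2*(l0*Qq))" using ep mu l0 Q by simp
  have h4b: "(1-\<epsilon>)*(\<mu>/2*(l0*Pp)) \<le> (1-\<epsilon>)*(\<mu>/2*x)" using P mu ep by (intro mult_left_mono) auto
  have h5: "\<epsilon>*(\<mu>*(l0*Pp)) \<le> \<epsilon>*(\<mu>*x)" using P ep mu by (intro mult_left_mono) auto
  have h6: "x*(\<epsilon> * (4*K + 2*\<mu>)) \<le> x*(\<mu>/2)" using eB x by (intro mult_left_mono) auto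
  have F: "(1-\<epsilon>)*(-\<mu>*x) + \<epsilon>*(4*K*x) + (1-\<epsilon>)*(\<mu>/2*x) + \<epsilon>*(\<mu>*x)
     = x*(\<epsilon> * (4*K + 2*\<mu>)) - x*(\<mu>/2) - \<epsilon>*\<mu>*x/2" by (simp add: field_simps)
  have "0 \<le> \<epsilon>*\<mu>*x" using ep mu x by simp
  show ?thesis unfolding E using h1 h2 h3 h4 h4b h5 h6 F \<open>0 \<le> \<epsilon>*\<mu>*x\<close> by linarith
qed

lemma term_bd:
  fixes c w lam nv L :: real
  assumes "0 < lam" "\<bar>c\<bar> \<le> nv" "\<bar>w\<bar> \<le> L*nv" "0 \<le> L"
  shows "\<bar>2*c*(-lam*(lam*c+w))/lam\<bar> \<le> 2*((lam+L)*nv\<^sup>2)"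
proof -
  have nv: "0 \<le> nv" using assms(2) by linarith
  have e: "\<bar>2*c*(-lam*(lam*c+w))/lam\<bar> = 2*(\<bar>c\<bar>*\<bar>lam*c+w\<bar>)"
    using assms(1) by (simp add: abs_mult)
  have "\<bar>lam*c+w\<bar> \<le> lam*nv + L*nv"
  proof -
    have "\<bar>lam*c\<bar> \<le> lam*nv" using assms(1,2) by (simp add: abs_mult)
    thus ?thesis using assms(3) by linarith
  qed
  hence "\<bar>c\<bar>*\<bar>lam*c+w\<bar> \<le> nv*(lam*nv + L*nv)"
    using assms(2) nv by (intro mult_mono) auto
  also have "\<dots> = (lam+L)*nv\<^sup>2" by (simp add: algebra_simps power2_eq_square)
  finally show ?thesis unfolding e by simp
qed

lemma abs_coef_le: assumes "ON e" shows "\<bar>u \<bullet> e n\<bar> \<le> norm u"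
  using coef_le[OF assms, of u n] by (metis abs_le_square_iff abs_norm_cancel)

lemma Veps_eq: assumes "spectral_basis e lam"
  shows "Veps e lam N \<epsilon> u = (1+\<epsilon>) * Vfun e lam N u + 2*\<epsilon>*(\<Sum>n<N. (u \<bullet> e n)\<^sup>2 / lam n)"
  unfolding Veps_def Vfun_def hn_split[OF assms, of u N] hnP[OF assms] by (simp add: algebra_simps)

theorem lemma3p2:
  fixes e :: "nat \<Rightarrow> 'a::{real_inner,complete_space}"
    and lam :: "nat \<Rightarrow> real" and N :: nat
    and l :: "real \<Rightarrow> 'a \<Rightarrow> 'a" and L :: real
    and \<mu> :: real and \<alpha> :: "real \<Rightarrow> real"
  assumes "spectral_basis e lam"
    and "bounded_op_family l L"
    and "strong_cone_condition e lam N l \<mu> \<alpha>"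
  shows "\<exists>\<epsilon>0>0. \<forall>\<epsilon>. 0 < \<epsilon> \<and> \<epsilon> < \<epsilon>0 \<longrightarrow>
     (\<forall>S T v. S < T \<longrightarrow> is_solution e lam l S T v \<longrightarrow>
        (\<forall>t\<in>{S..T}.
           (\<exists>D. ((\<lambda>s. Veps e lam N \<epsilon> (v s)) has_real_derivative D) (at t within {S..T}) \<and>
                D + (\<alpha> t + lam 0 * \<mu> / 2) * Veps e lam N \<epsilon> (v t) \<le> 0) \<and>
           (\<exists>D. ((\<lambda>s. Veps e lam N (- \<epsilon>) (v s)) has_real_derivative D) (at t within {S..T}) \<and>
                D + (\<alpha> t - lam 0 * \<mu> / 2) * Veps e lam N (- \<epsilon>) (v t) \<le> 0)))"
proof -
  note sb = assms(1)
  have O: "ON e" by (rule sb_ON[OF sb])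
  have l0: "0 < lam 0" using sb_lam[OF sb] by simp
  have bl: "\<And>t. bounded_linear (l t)" and onL: "\<And>t. onorm (l t) \<le> L"
    using assms(2) unfolding bounded_op_family_def by auto
  have L0: "0 \<le> L" using onorm_pos_le[OF bl[of 0]] onL[of 0] by linarith
  have mu: "0 < \<mu>" using assms(3) unfolding strong_cone_condition_def by blast
  obtain am ap where amp: "0 < am" "\<And>t. am \<le> \<alpha> t" "\<And>t. \<alpha> t \<le> ap"
    using assms(3) unfolding strong_cone_condition_def by blast
  have ap: "0 < ap" using amp(1) amp(2)[of 0] amp(3)[of 0] by linarith
  have cone: "\<And>S T v t. S < T \<Longrightarrow> is_solution e lam l S T v \<Longrightarrow> t \<in> {S..T} \<Longrightarrow>
     \<exists>D. ((\<lambda>s. Vfun e lam N (v s)) has_real_derivative D) (at t within {S..T}) \<and>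
             D + \<alpha> t * Vfun e lam N (v t) \<le> - \<mu> * (norm (v t))\<^sup>2"
    using assms(3) unfolding strong_cone_condition_def by blast
  define K where "K = (\<Sum>n<N. lam n + L)"
  have K: "0 \<le> K" unfolding K_def using sb_lam(3)[OF sb] L0 by (intro sum_nonneg) (simp add: add_nonneg_nonneg less_imp_le)
  define B where "B = 4*K + 2*ap/lam 0 + 2*\<mu>"
  have B: "0 < B" unfolding B_def using K ap l0 mu by (simp add: add_nonneg_pos)
  have B2: "4*K + 2*\<mu> \<le> B" unfolding B_def using ap l0 by simp
  define \<epsilon>0 where "\<epsilon>0 = min (1/2) (\<mu>/(2*B))"
  have e0: "0 < \<epsilon>0" unfolding \<epsilon>0_def using mu B by simp
  show ?thesis
  proof (rule exI[of _ \<epsilon>0], intro conjI e0 allI impI ballI)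
    fix \<epsilon> S T v t
    assume ep: "0 < \<epsilon> \<and> \<epsilon> < \<epsilon>0" and ST: "S < T" and sol: "is_solution e lam l S T v" and t: "t \<in> {S..T}"
    have ep1: "\<epsilon> < 1" using ep unfolding \<epsilon>0_def by simp
    have "\<epsilon> < \<mu>/(2*B)" using ep unfolding \<epsilon>0_def by simp
    hence eB: "\<epsilon> * B \<le> \<mu>/2" using B by (simp add: field_simps)
    have eB2: "\<epsilon> * (4*K + 2*\<mu>) \<le> \<mu>/2"
      using mult_left_mono[OF B2, of \<epsilon>] ep eB by linarith
    obtain DV where DV: "((\<lambda>s. Vfun e lam N (v s)) has_real_derivative DV) (at t within {S..T})"
      and DVb: "DV + \<alpha> t * Vfun e lam N (v t) \<le> - \<mu> * (norm (v t))\<^sup>2"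
      using cone[OF ST sol t] by blast
    define c where "c n = v t \<bullet> e n" for n
    define cd where "cd n = - lam n * (lam n * (v t \<bullet> e n) + (l t (v t) \<bullet> e n))" for n
    define dP where "dP = (\<Sum>n<N. 2*c n*cd n / lam n)"
    have dc: "((\<lambda>s. v s \<bullet> e n) has_real_derivative cd n) (at t within {S..T})" for n
      using sol t unfolding is_solution_def cd_def by blast
    have dterm: "((\<lambda>s. (v s \<bullet> e n)\<^sup>2 / lam n) has_real_derivative 2*c n*cd n / lam n) (at t within {S..T})" for n
      using DERIV_cdivide[OF DERIV_power[OF dc[of n], of 2], of "lam n"] unfolding c_def
      by (simp add: algebra_simps)
    have dPd: "((\<lambda>s. \<Sum>n<N. (v s \<bullet> e n)\<^sup>2 / lam n) has_real_derivative dP) (at t within {S..T})"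
      unfolding dP_def by (rule DERIV_sum) (rule dterm)
    have nlv: "norm (l t (v t)) \<le> L * norm (v t)"
      using onorm[OF bl[of t], of "v t"] onL[of t] by (meson mult_right_mono norm_ge_zero order_trans)
    have dPb: "\<bar>dP\<bar> \<le> 2*K*(norm (v t))\<^sup>2"
    proof -
      have "\<bar>dP\<bar> \<le> (\<Sum>n<N. \<bar>2*c n*cd n / lam n\<bar>)" unfolding dP_def by (rule sum_abs)
      also have "\<dots> \<le> (\<Sum>n<N. 2*((lam n + L)*(norm (v t))\<^sup>2))"
      proof (rule sum_mono)
        fix n
        have "\<bar>l t (v t) \<bullet> e n\<bar> \<le> L * norm (v t)" using abs_coef_le[OF O] nlv order_trans by blast
        thus "\<bar>2*c n*cd n / lam n\<bar> \<le> 2*((lam n + L)*(norm (v t))\<^sup>2)"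
          unfolding cd_def c_def using term_bd[OF sb_lam(3)[OF sb] abs_coef_le[OF O] _ L0] by simp
      qed
      also have "\<dots> = 2*K*(norm (v t))\<^sup>2" unfolding K_def by (simp add: sum_distrib_left sum_distrib_right algebra_simps)
      finally show ?thesis .
    qed
    define Qq where "Qq = hnorm2 e lam (-1) (projQ e N (v t))"
    define Pp where "Pp = hnorm2 e lam (-1) (projP e N (v t))"
    have Vt: "Vfun e lam N (v t) = Qq - Pp" unfolding Vfun_def Qq_def Pp_def ..
    have Pp_eq: "(\<Sum>n<N. (v t \<bullet> e n)\<^sup>2 / lam n) = Pp" unfolding Pp_def hnP[OF sb] ..
    have Qb: "0 \<le> Qq" "lam 0 * Qq \<le> (norm (v t))\<^sup>2" unfolding Qq_def
      using hn_bound(1)[OF sb] hn_bounds2(1)[OF sb] by auto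
    have Pb: "0 \<le> Pp" "lam 0 * Pp \<le> (norm (v t))\<^sup>2" unfolding Pp_def
      using hn_bound(1)[OF sb] hn_bounds2(2)[OF sb] by auto
    have al: "0 < \<alpha> t" "\<alpha> t \<le> ap" using amp(1) amp(2)[of t] amp(3)[of t] by auto
    show "\<exists>D. ((\<lambda>s. Veps e lam N \<epsilon> (v s)) has_real_derivative D) (at t within {S..T}) \<and>
                D + (\<alpha> t + lam 0 * \<mu> / 2) * Veps e lam N \<epsilon> (v t) \<le> 0"
    proof (intro exI conjI)
      show "((\<lambda>s. Veps e lam N \<epsilon> (v s)) has_real_derivative (1+\<epsilon>)*DV + 2*\<epsilon>*dP) (at t within {S..T})"
        unfolding Veps_eq[OF sb]
        by (intro DERIV_add DERIV_cmult DV dPd)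
      show "(1+\<epsilon>)*DV + 2*\<epsilon>*dP + (\<alpha> t + lam 0 * \<mu> / 2) * Veps e lam N \<epsilon> (v t) \<le> 0"
        unfolding Veps_eq[OF sb] Pp_eq Vt
        by (rule alg1[OF _ l0 mu _ al K _ DVb[unfolded Vt] dPb Qb Pb]) (use ep eB B_def in auto)
    qed
    show "\<exists>D. ((\<lambda>s. Veps e lam N (- \<epsilon>) (v s)) has_real_derivative D) (at t within {S..T}) \<and>
                D + (\<alpha> t - lam 0 * \<mu> / 2) * Veps e lam N (- \<epsilon>) (v t) \<le> 0"
    proof (intro exI conjI)
      show "((\<lambda>s. Veps e lam N (- \<epsilon>) (v s)) has_real_derivative (1+(-\<epsilon>))*DV + 2*(-\<epsilon>)*dP) (at t within {S..T})"
        unfolding Veps_eq[OF sb]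
        by (intro DERIV_add DERIV_cmult DV dPd)
      have "(1-\<epsilon>)*DV - 2*\<epsilon>*dP + (\<alpha> t - lam 0*\<mu>/2)*((1-\<epsilon>)*(Qq-Pp) - 2*\<epsilon>*Pp) \<le> 0"
        by (rule alg2[OF _ l0 mu _ ep1 al(1) K eB2 DVb[unfolded Vt] dPb Qb Pb]) (use ep in auto)
      thus "(1+(-\<epsilon>))*DV + 2*(-\<epsilon>)*dP + (\<alpha> t - lam 0 * \<mu> / 2) * Veps e lam N (- \<epsilon>) (v t) \<le> 0"
        unfolding Veps_eq[OF sb] Pp_eq Vt by simp
    qed
  qed
qed

end
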